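(* Let $d\ge0$ be fixed, let $n\ge3$ and $t\ge2$ satisfy $3\ln\big((d+1)e^2\big)\ln t\le \ln n$, and let $G_n\sim G(n,d/n)$. Then the probability that there exist an integer $k\in[2,t]$ and a $k$-vertex subgraph of $G_n$ with at least $k+\frac{k}{\ln k}$ edges is at most $\frac{15}{n}$; that is, $$\Pr\Big[\sum_{k=2}^{t}\ \sum_{j\ge k+k/\ln k} s_k(G_n,j)>0\Big]\le \frac{15}{n}.$$
   Context: $G(n,p)$ is the random graph on $[n]$ with each edge present independently with probability $p$ (the hypotheses imply $d/n\le1$). For a graph $G$, $k\ge1$ and $j\ge0$, $s_k(G,j)$ is the number of unlabeled (isomorphism classes of) subgraphs of $G$ with exactly $k$ vertices and $j$ edges. *)

theory Defs
  imports Complex_Main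
begin

definition all_edges :: "nat \<Rightarrow> nat set set" where
  "all_edges n = {e. \<exists>u v. u < n \<and> v < n \<and> u \<noteq> v \<and> e = {u, v}}"

text \<open>Probability that the random graph G(n,p) (each of the possible edges present
  independently with probability p) has property P; a graph is identified with its edge set.\<close>
definition gnp_prob :: "nat \<Rightarrow> real \<Rightarrow> (nat set set \<Rightarrow> bool) \<Rightarrow> real" where
  "gnp_prob n p P =
     (\<Sum>E \<in> {E. E \<subseteq> all_edges n \<and> P E}.
        p ^ card E * (1 - p) ^ (card (all_edges n) - card E))"

text \<open>The graph with edge set E on [n] has a subgraph with exactly k vertices and j edges
  (equivalently s_k(G,j) > 0).\<close>
definition has_subgraph :: "nat \<Rightarrow> nat set set \<Rightarrow> nat \<Rightarrow> nat \<Rightarrow> bool" where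
  "has_subgraph n E k j \<longleftrightarrow>
     (\<exists>S F. S \<subseteq> {..<n} \<and> card S = k \<and> F \<subseteq> E \<and> (\<forall>e\<in>F. e \<subseteq> S) \<and> card F = j)"

end

theory Submission
  imports Defs "HOL-Analysis.Complex_Transcendental"
begin


lemma finite_all_edges: "finite (all_edges n)"
proof -
  have "all_edges n \<subseteq> Pow {..<n}" unfolding all_edges_def by auto
  thus ?thesis by (rule finite_subset) auto
qed

lemma binom_subsets:
  fixes p :: real
  assumes "finite B"
  shows "(\<Sum>G\<in>Pow B. p ^ card G * (1 - p) ^ (card B - card G)) = 1"
proof -
  have "(\<Prod>x\<in>B. p + (1 - p)) = (\<Sum>X\<in>Pow B. (\<Prod>x\<in>X. p) * (\<Prod>x\<in>B-X. 1 - p))"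
    by (rule prod_add[OF assms])
  also have "\<dots> = (\<Sum>G\<in>Pow B. p ^ card G * (1 - p) ^ (card B - card G))"
    by (rule sum.cong) (auto simp: card_Diff_subset finite_subset[OF _ assms])
  finally show ?thesis by simp
qed

lemma sum_supersets:
  fixes p :: real
  assumes "finite A" "F \<subseteq> A"
  shows "(\<Sum>E\<in>{E. E \<subseteq> A \<and> F \<subseteq> E}. p ^ card E * (1 - p) ^ (card A - card E)) = p ^ card F"
proof -
  have inj: "inj_on (\<lambda>G. F \<union> G) (Pow (A - F))" by (auto simp: inj_on_def)
  have img: "(\<lambda>G. F \<union> G) ` Pow (A - F) = {E. E \<subseteq> A \<and> F \<subseteq> E}"
  proof
    show "{E. E \<subseteq> A \<and> F \<subseteq> E} \<subseteq> (\<lambda>G. F \<union> G) ` Pow (A - F)"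
    proof
      fix E assume "E \<in> {E. E \<subseteq> A \<and> F \<subseteq> E}"
      hence "E = F \<union> (E - F)" "E - F \<in> Pow (A - F)" by auto
      thus "E \<in> (\<lambda>G. F \<union> G) ` Pow (A - F)" by blast
    qed
  qed (use assms in auto)
  have fF: "finite F" using assms finite_subset by blast
  have "(\<Sum>E\<in>{E. E \<subseteq> A \<and> F \<subseteq> E}. p ^ card E * (1 - p) ^ (card A - card E))
     = (\<Sum>G\<in>Pow (A - F). p ^ card (F \<union> G) * (1 - p) ^ (card A - card (F \<union> G)))"
    by (subst img[symmetric], subst sum.reindex[OF inj]) simp
  also have "\<dots> = (\<Sum>G\<in>Pow (A - F). p ^ card F * (p ^ card G * (1 - p) ^ (card (A - F) - card G)))"
  proof (rule sum.cong[OF refl])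
    fix G assume G: "G \<in> Pow (A - F)"
    have fG: "finite G" using G assms(1) finite_subset by blast
    have c1: "card (F \<union> G) = card F + card G" using G fF fG by (subst card_Un_disjoint) auto
    have c2: "card (A - F) = card A - card F" using assms by (simp add: card_Diff_subset fF)
    have "card F \<le> card A" using assms card_mono by blast
    hence "card A - card (F \<union> G) = card (A - F) - card G" using c1 c2 by simp
    thus "p ^ card (F \<union> G) * (1 - p) ^ (card A - card (F \<union> G)) = p ^ card F * (p ^ card G * (1 - p) ^ (card (A - F) - card G))"
      using c1 by (simp add: power_add)
  qed
  also have "\<dots> = p ^ card F" using binom_subsets[of "A - F" p] assms
    by (simp add: sum_distrib_left[symmetric])
  finally show ?thesis .
qed

lemma gnp_superset:
  assumes "F \<subseteq> all_edges n"
  shows "gnp_prob n p (\<lambda>E. F \<subseteq> E) = p ^ card F"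
  unfolding gnp_prob_def using sum_supersets[OF finite_all_edges assms] by simp

lemma gnp_mono:
  assumes "0 \<le> p" "p \<le> 1" "\<And>E. E \<subseteq> all_edges n \<Longrightarrow> P E \<Longrightarrow> Q E"
  shows "gnp_prob n p P \<le> gnp_prob n p Q"
  unfolding gnp_prob_def
proof (rule sum_mono2)
  show "finite {E. E \<subseteq> all_edges n \<and> Q E}" using finite_all_edges by auto
qed (use assms in auto)

lemma gnp_union:
  assumes "0 \<le> p" "p \<le> 1" "finite I"
  shows "gnp_prob n p (\<lambda>E. \<exists>i\<in>I. Q i E) \<le> (\<Sum>i\<in>I. gnp_prob n p (Q i))"
  using assms(3)
proof (induction I rule: finite_induct)
  case empty
  then show ?case by (simp add: gnp_prob_def)
next
  case (insert x I)
  let ?w = "\<lambda>E. p ^ card E * (1 - p) ^ (card (all_edges n) - card E)"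
  have fin: "\<And>P. finite {E. E \<subseteq> all_edges n \<and> P E}" using finite_all_edges by auto
  have eq: "{E. E \<subseteq> all_edges n \<and> (\<exists>i\<in>insert x I. Q i E)} =
     {E. E \<subseteq> all_edges n \<and> Q x E} \<union> {E. E \<subseteq> all_edges n \<and> (\<exists>i\<in>I. Q i E)}" by auto
  have nn: "\<And>E. 0 \<le> ?w E" using assms by simp
  have "gnp_prob n p (\<lambda>E. \<exists>i\<in>insert x I. Q i E) =
     sum ?w ({E. E \<subseteq> all_edges n \<and> Q x E} \<union> {E. E \<subseteq> all_edges n \<and> (\<exists>i\<in>I. Q i E)})"
    unfolding gnp_prob_def eq ..
  also have "\<dots> \<le> gnp_prob n p (Q x) + gnp_prob n p (\<lambda>E. \<exists>i\<in>I. Q i E)"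
    unfolding gnp_prob_def
    by (subst sum_Un[OF fin fin]) (simp add: sum_nonneg nn)
  also have "\<dots> \<le> gnp_prob n p (Q x) + (\<Sum>i\<in>I. gnp_prob n p (Q i))"
    using insert by simp
  finally show ?case using insert by simp
qed

lemma edges_in_eq:
  assumes "S \<subseteq> {..<n}"
  shows "{e \<in> all_edges n. e \<subseteq> S} = {e. e \<subseteq> S \<and> card e = 2}"
  using assms unfolding all_edges_def by (auto simp: card_2_iff)

lemma card_edges_in:
  assumes "S \<subseteq> {..<n}"
  shows "card {e \<in> all_edges n. e \<subseteq> S} = card S choose 2"
  using assms by (simp add: edges_in_eq n_subsets finite_subset)

definition Idx :: "nat \<Rightarrow> nat \<Rightarrow> nat \<Rightarrow> (nat set \<times> nat set set) set" where
  "Idx n k J = {(S,F). S \<subseteq> {..<n} \<and> card S = k \<and> F \<subseteq> all_edges n \<and> (\<forall>e\<in>F. e \<subseteq> S) \<and> card F = J}"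

lemma card_Idx: "card (Idx n k J) = (n choose k) * ((k choose 2) choose J)"
proof -
  have eq: "Idx n k J = Sigma {S. S \<subseteq> {..<n} \<and> card S = k} (\<lambda>S. {F. F \<subseteq> {e \<in> all_edges n. e \<subseteq> S} \<and> card F = J})"
    unfolding Idx_def by auto
  have fin1: "finite {S. S \<subseteq> {..<n} \<and> card S = k}" by simp
  have fin2: "finite {F. F \<subseteq> {e \<in> all_edges n. e \<subseteq> S} \<and> card F = J}" for S
    using finite_all_edges by simp
  have "card (Idx n k J) = (\<Sum>S\<in>{S. S \<subseteq> {..<n} \<and> card S = k}. card {F. F \<subseteq> {e \<in> all_edges n. e \<subseteq> S} \<and> card F = J})"
    unfolding eq by (rule card_SigmaI[OF fin1]) (use fin2 in auto)
  also have "\<dots> = (\<Sum>S\<in>{S. S \<subseteq> {..<n} \<and> card S = k}. (k choose 2) choose J)"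
  proof (rule sum.cong[OF refl])
    fix S assume S: "S \<in> {S. S \<subseteq> {..<n} \<and> card S = k}"
    have "finite {e \<in> all_edges n. e \<subseteq> S}" using finite_all_edges by simp
    thus "card {F. F \<subseteq> {e \<in> all_edges n. e \<subseteq> S} \<and> card F = J} = (k choose 2) choose J"
      using S by (simp add: n_subsets card_edges_in)
  qed
  also have "\<dots> = (n choose k) * ((k choose 2) choose J)" by (simp add: n_subsets)
  finally show ?thesis .
qed

lemma finite_Idx: "finite (Idx n k J)"
proof -
  have "Idx n k J \<subseteq> Pow {..<n} \<times> Pow (all_edges n)" unfolding Idx_def by auto
  thus ?thesis by (rule finite_subset) (simp add: finite_all_edges)
qed

lemma has_subgraph_down:
  assumes "has_subgraph n E k j" "J \<le> j" "E \<subseteq> all_edges n"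
  shows "\<exists>i\<in>Idx n k J. snd i \<subseteq> E"
proof -
  obtain S F where SF: "S \<subseteq> {..<n}" "card S = k" "F \<subseteq> E" "\<forall>e\<in>F. e \<subseteq> S" "card F = j"
    using assms(1) unfolding has_subgraph_def by blast
  obtain F' where F': "F' \<subseteq> F" "card F' = J" using obtain_subset_with_card_n assms(2) SF(5) by metis
  have I: "(S, F') \<in> Idx n k J" unfolding Idx_def using SF F' assms by auto
  have "snd (S, F') \<subseteq> E" using F' SF by simp
  thus ?thesis using I by blast
qed



lemma exp_ge_partial:
  fixes x :: real assumes "0 \<le> x"
  shows "(\<Sum>i<N. x ^ i / fact i) \<le> exp x"
proof -
  have s: "(\<lambda>i. x ^ i / fact i) sums exp x" using exp_converges[of x] by (simp add: divide_inverse mult.commute)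
  have "(\<Sum>i<N. x ^ i / fact i) \<le> (\<Sum>i. x ^ i / fact i)"
    by (rule sum_le_suminf[OF sums_summable[OF s]]) (use assms in auto)
  thus ?thesis using s by (simp add: sums_iff)
qed

lemma exp_ge_term:
  fixes x :: real assumes "0 \<le> x"
  shows "x ^ N / fact N \<le> exp x"
proof -
  have "x ^ N / fact N \<le> (\<Sum>i<Suc N. x ^ i / fact i)"
    using assms by (simp add: sum_nonneg)
  also have "\<dots> \<le> exp x" by (rule exp_ge_partial[OF assms])
  finally show ?thesis .
qed

lemma ln5: "ln (5::real) < 5/3"
proof -
  have "(\<Sum>i<5. (5/3::real) ^ i / fact i) \<le> exp (5/3)" by (rule exp_ge_partial) simp
  moreover have "(\<Sum>i<5. (5/3::real) ^ i / fact i) > 5" by (simp add: lessThan_nat_numeral fact_numeral power_divide)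
  ultimately have "5 < exp (5/3::real)" by linarith
  thus ?thesis using ln_less_cancel_iff[of 5 "exp (5/3)"] by simp
qed

lemma ln9: "ln (9::real) < 9/4"
proof -
  have "(\<Sum>i<7. (9/4::real) ^ i / fact i) \<le> exp (9/4)" by (rule exp_ge_partial) simp
  moreover have "(\<Sum>i<7. (9/4::real) ^ i / fact i) > 9" by (simp add: lessThan_nat_numeral fact_numeral power_divide)
  ultimately have "9 < exp (9/4::real)" by linarith
  thus ?thesis using ln_less_cancel_iff[of 9 "exp (9/4)"] by simp
qed

lemma ln4: "ln (4::real) < 2"
proof -
  have "(\<Sum>i<3. (2::real) ^ i / fact i) \<le> exp 2" by (rule exp_ge_partial) simp
  moreover have "(\<Sum>i<3. (2::real) ^ i / fact i) > 4" by (simp add: lessThan_nat_numeral fact_numeral)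
  ultimately have "4 < exp (2::real)" by linarith
  thus ?thesis using ln_less_cancel_iff[of 4 "exp 2"] by simp
qed

lemma ln5_ge: "3/2 \<le> ln (5::real)"
proof -
  have "exp (3/2::real) ^ 2 = exp 3" by (simp flip: exp_of_nat_mult)
  also have "\<dots> = exp 1 ^ 3" by (simp flip: exp_of_nat_mult)
  also have "\<dots> \<le> (272/100) ^ 3" using e_less_272 by (intro power_mono) auto
  also have "\<dots> < 5 ^ 2" by (simp add: power_divide)
  finally have *: "exp (3/2::real) ^ 2 < 5 ^ 2" .
  have e: "exp (3/2::real) \<le> 5"
  proof (rule ccontr)
    assume "\<not> ?thesis"
    hence "5 ^ 2 < exp (3/2::real) ^ 2" by (intro power_strict_mono) auto
    thus False using * by linarith
  qed
  thus ?thesis using ln_le_cancel_iff[of "exp (3/2)" 5] by simp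
qed

lemma ln2_ge: "1/3 \<le> ln (2::real)"
proof -
  have "exp (1/3::real) ^ 3 = exp 1" by (simp flip: exp_of_nat_mult)
  also have "\<dots> < 2 ^ 3" using e_less_272 by simp
  finally have *: "exp (1/3::real) ^ 3 < 2 ^ 3" .
  have e: "exp (1/3::real) \<le> 2"
  proof (rule ccontr)
    assume "\<not> ?thesis"
    hence "2 ^ 3 < exp (1/3::real) ^ 3" by (intro power_strict_mono) auto
    thus False using * by linarith
  qed
  thus ?thesis using ln_le_cancel_iff[of "exp (1/3)" 2] by simp
qed

lemma ln_le_lin:
  fixes x a :: real assumes "0 < a" "a \<le> x"
  shows "ln x \<le> ln a + x / a - 1"
proof -
  have "ln (x / a) \<le> x / a - 1" using assms by (intro ln_le_minus_one) auto
  thus ?thesis using assms by (simp add: ln_div)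
qed

lemma ln_lt_third: fixes x :: real assumes "5 \<le> x" shows "ln x < x / 3"
  using ln_le_lin[of 5 x] assms ln5 by simp

lemma ln_lt_quarter: fixes x :: real assumes "9 \<le> x" shows "ln x < x / 4"
  using ln_le_lin[of 9 x] assms ln9 by simp

lemma choose_le_pow_fact: "real (N choose k) \<le> real N ^ k / fact k"
proof -
  have "(N choose k) * fact k \<le> N ^ k" by (rule binomial_fact_pow)
  hence "real (N choose k) * fact k \<le> real N ^ k" by (metis of_nat_fact of_nat_le_iff of_nat_mult of_nat_power)
  thus ?thesis by (simp add: field_simps)
qed

lemma term_bound:
  fixes d Lt :: real and n k J :: nat
  assumes d: "d \<ge> 0" and n: "n \<ge> 3" and k: "k \<ge> 5" and kt: "ln (real k) \<le> Lt"
    and hyp: "3 * ln ((d + 1) * exp 2) * Lt \<le> ln (real n)"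
    and J: "real J \<ge> real k + real k / ln (real k)"
  shows "real (n choose k) * real ((k choose 2) choose J) * (d / real n) ^ J
         \<le> 60 / (real n * real k * (real k - 1))"
proof -
  define lam where "lam = ln (real k)"
  define a where "a = ln ((d + 1) * exp 2)"
  define L where "L = ln (real n)"
  define c where "c = (d + 1) * exp 2"
  have cpos: "c > 0" unfolding c_def using d by simp
  have a_eq: "a = ln (d + 1) + 2" unfolding a_def using d by (simp add: ln_mult)
  have a2: "a \<ge> 2" using a_eq d by simp
  have kpos: "real k > 0" using k by simp
  have "ln 5 \<le> ln (real k)" using ln_le_cancel_iff[of 5 "real k"] k by simp
  hence lam_ge: "lam \<ge> 3/2" unfolding lam_def using ln5_ge by linarith
  have lam_lt: "lam < real k / 3" unfolding lam_def using ln_lt_third[of "real k"] k by simp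
  have npos: "real n > 0" using n by simp
  have L0: "L \<ge> 0" unfolding L_def using n by simp
  have LaL: "3 * a * lam \<le> L"
  proof -
    have "3 * a * lam \<le> 3 * a * Lt" using kt a2 unfolding lam_def by (intro mult_left_mono) auto
    thus ?thesis using hyp unfolding a_def L_def by linarith
  qed
  have Jk: "real k / lam \<le> real J - real k" using J unfolding lam_def by simp
  have "real k / lam > 3" using lam_lt lam_ge by (simp add: field_simps)
  hence J4: "J \<ge> k + 4" using Jk by linarith
  define m where "m = J - k"
  have Jm: "J = k + m" unfolding m_def using J4 by simp
  have m4: "m \<ge> 4" using J4 unfolding m_def by simp
  have kml: "real k \<le> real m * lam"
  proof -
    have "real k / lam \<le> real m" using Jk Jm by simp
    thus ?thesis using lam_ge by (simp add: field_simps)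
  qed
  have K: "real (k choose 2) \<le> real k ^ 2 / 2"
  proof -
    have "(k choose 2) * 2 \<le> k ^ 2" using binomial_fact_pow[of k 2] by (simp add: numeral_eq_Suc)
    hence "real ((k choose 2) * 2) \<le> real (k ^ 2)" by (simp only: of_nat_le_iff)
    thus ?thesis by simp
  qed
  have A: "real (n choose k) \<le> real n ^ k / fact k" by (rule choose_le_pow_fact)
  have B: "real ((k choose 2) choose J) \<le> (real k ^ 2 / 2) ^ J / fact J"
  proof -
    have "real ((k choose 2) choose J) \<le> real (k choose 2) ^ J / fact J" by (rule choose_le_pow_fact)
    also have "\<dots> \<le> (real k ^ 2 / 2) ^ J / fact J"
      by (intro divide_right_mono power_mono K) auto
    finally show ?thesis .
  qed
  have C1: "real k ^ k / fact k \<le> exp (real k)" by (rule exp_ge_term) simp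
  have C2: "real k ^ J / fact J \<le> exp (real J)"
  proof -
    have "real k ^ J \<le> real J ^ J" using J4 by (intro power_mono) auto
    hence "real k ^ J / fact J \<le> real J ^ J / fact J" by (intro divide_right_mono) auto
    also have "\<dots> \<le> exp (real J)" by (rule exp_ge_term) simp
    finally show ?thesis .
  qed
  define P where "P = real n ^ k / fact k * ((real k ^ 2 / 2) ^ J / fact J) * (d / real n) ^ J"
  have LP: "real (n choose k) * real ((k choose 2) choose J) * (d / real n) ^ J \<le> P"
    unfolding P_def using A B d npos
    by (intro mult_mono) (auto simp: zero_le_divide_iff)
  have pw: "(real k ^ 2) ^ J = real k ^ k * real k ^ J * real k ^ m"
  proof -
    have "(real k ^ 2) ^ J = real k ^ (2 * J)" by (simp add: power_mult)
    also have "2 * J = k + J + m" using Jm by simp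
    finally show ?thesis by (simp add: power_add)
  qed
  have nJ: "real n ^ J = real n ^ k * real n ^ m" using Jm by (simp add: power_add)
  have "P = real n ^ k / fact k * ((real k ^ k * real k ^ J * real k ^ m) / 2 ^ J / fact J) * (d ^ J / (real n ^ k * real n ^ m))"
    unfolding P_def by (simp add: pw power_divide nJ)
  also have "\<dots> = (real k ^ k / fact k) * (real k ^ J / fact J) * (real k ^ m * (d ^ J / 2 ^ J) / real n ^ m)"
    using npos by (simp add: field_simps)
  finally have Peq: "P = (real k ^ k / fact k) * (real k ^ J / fact J) * (real k ^ m * (d / 2) ^ J / real n ^ m)"
    by (simp add: power_divide)
  define Y where "Y = c ^ J * real k ^ m / real n ^ m"
  have PY: "P \<le> Y"
  proof -
    have nn: "0 \<le> real k ^ m * (d / 2) ^ J / real n ^ m" using d npos by simp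
    have "P \<le> exp (real k) * exp (real J) * (real k ^ m * (d / 2) ^ J / real n ^ m)"
      unfolding Peq using C1 C2 nn by (intro mult_mono) auto
    also have "\<dots> \<le> exp (real J) * exp (real J) * (real k ^ m * (d / 2) ^ J / real n ^ m)"
      using nn J4 by (intro mult_right_mono) auto
    also have "exp (real J) * exp (real J) * (d / 2) ^ J = (exp 2 * (d / 2)) ^ J"
    proof -
      have "exp (real J) * exp (real J) = exp 2 ^ J"
        by (simp add: exp_of_nat_mult[symmetric] mult_exp_exp algebra_simps)
      thus ?thesis by (simp only: power_mult_distrib)
    qed
    hence "exp (real J) * exp (real J) * (real k ^ m * (d / 2) ^ J / real n ^ m)
        = (exp 2 * (d / 2)) ^ J * real k ^ m / real n ^ m"
    proof -
      have gen: "x * (y * z / w) = (x * z) * y / w" for x y z w :: real by (simp add: field_simps)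
      show ?thesis unfolding gen[of "exp (real J) * exp (real J)"] \<open>_ = (exp 2 * (d / 2)) ^ J\<close> ..
    qed
    also have "\<dots> \<le> Y" unfolding Y_def c_def using d npos
      by (intro divide_right_mono mult_right_mono power_mono) auto
    finally show ?thesis .
  qed
  have Yexp: "Y = exp (real J * a + real m * lam - real m * L)"
  proof -
    have "c ^ J = exp (real J * a)" unfolding a_def c_def[symmetric] using cpos by (simp add: exp_of_nat_mult)
    moreover have "real k ^ m = exp (real m * lam)" unfolding lam_def using kpos by (simp add: exp_of_nat_mult)
    moreover have "real n ^ m = exp (real m * L)" unfolding L_def using npos by (simp add: exp_of_nat_mult)
    ultimately show ?thesis unfolding Y_def by (simp add: exp_diff exp_add)
  qed
  have Bb: "lam * a + a + lam - L \<le> -(5/18) * L"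
  proof -
    have "a * (lam - 3/2) \<ge> 0" using a2 lam_ge by simp
    moreover have "lam * (a - 2) \<ge> 0" using a2 lam_ge by simp
    ultimately show ?thesis using LaL by (simp add: algebra_simps) 
  qed
  have ex1: "real J * a + real m * lam - real m * L \<le> real m * (lam * a + a + lam - L)"
  proof -
    have "real k * a \<le> real m * lam * a" using kml a2 by (intro mult_right_mono) auto
    thus ?thesis using Jm by (simp add: algebra_simps)
  qed
  have ex2: "real m * (lam * a + a + lam - L) \<le> real m * (-(5/18) * L)"
    using Bb by (intro mult_left_mono) auto
  have ex: "real J * a + real m * lam - real m * L \<le> -(5/18) * (real m * L)"
    using ex1 ex2 by simp
  have YB: "Y \<le> 60 / (real n * real k * (real k - 1))"
  proof (cases "k \<le> 8")
    case True
    have "4 * L \<le> real m * L" using m4 L0 by (intro mult_right_mono) auto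
    hence "real J * a + real m * lam - real m * L \<le> - L" using ex L0 by linarith
    hence "Y \<le> exp (- L)" unfolding Yexp by simp
    also have "\<dots> = 1 / real n" unfolding L_def using npos by (simp add: exp_minus inverse_eq_divide)
    also have "\<dots> \<le> 60 / (real n * real k * (real k - 1))"
    proof -
      have "real k * (real k - 1) \<le> 8 * 7" using True k by (intro mult_mono) auto
      moreover have q: "real k * (real k - 1) > 0" using k by simp
      ultimately have "real k * (real k - 1) / (real n * (real k * (real k - 1))) \<le> 60 / (real n * (real k * (real k - 1)))"
        using npos by (intro divide_right_mono) auto
      moreover have "real k * (real k - 1) / (real n * (real k * (real k - 1))) = 1 / real n" using q k by simp
      ultimately show ?thesis by (simp add: mult.assoc)
    qed
    finally show ?thesis .
  next
    case False
    have "lam < real k / 4" unfolding lam_def using ln_lt_quarter[of "real k"] False by simp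
    hence "real k / lam > 4" using lam_ge by (simp add: field_simps)
    hence "J \<ge> k + 5" using Jk by linarith
    hence m5: "m \<ge> 5" using Jm by simp
    have "5 * L \<le> real m * L" using m5 L0 by (intro mult_right_mono) auto
    moreover have "6 * lam \<le> L"
    proof -
      have "6 * lam \<le> 3 * a * lam" using a2 lam_ge by (intro mult_right_mono) auto
      thus ?thesis using LaL by linarith
    qed
    ultimately have "real J * a + real m * lam - real m * L \<le> - L - 2 * lam" using ex L0 lam_ge by linarith
    hence "Y \<le> exp (- L - 2 * lam)" unfolding Yexp by simp
    also have "\<dots> = 1 / (real n * real k ^ 2)"
    proof -
      have "exp (2 * lam) = real k ^ 2" using exp_of_nat_mult[of 2 lam] kpos unfolding lam_def by simp
      moreover have "exp L = real n" unfolding L_def using npos by simp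
      ultimately show ?thesis by (simp add: exp_diff exp_minus inverse_eq_divide)
    qed
    also have "\<dots> \<le> 60 / (real n * real k * (real k - 1))"
    proof (rule frac_le)
      show "0 < real n * real k * (real k - 1)" using npos k by simp
      have "real n * real k * (real k - 1) \<le> real n * real k * real k"
        using npos k by (intro mult_left_mono) auto
      thus "real n * real k * (real k - 1) \<le> real n * real k ^ 2" by (simp add: power2_eq_square mult.assoc)
    qed auto
    finally show ?thesis .
  qed
  show ?thesis using LP PY YB by linarith
qed


lemma small_k:
  assumes "2 \<le> k" "k \<le> 4" "real J \<ge> real k + real k / ln (real k)"
  shows "(k choose 2) < J"
proof -
  have pos: "real k / ln (real k) > 0" using assms(1) by simp
  hence Jk: "real J > real k" using assms(3) by linarith
  have "k = 2 \<or> k = 3 \<or> k = 4" using assms(1,2) by auto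
  moreover
  { assume k: "k = 2"
    have "J > 2" using Jk k by simp
    hence ?thesis using k by simp }
  moreover
  { assume k: "k = 3"
    have "J > 3" using Jk k by simp
    moreover have "(3::nat) choose 2 = 3" by (simp add: choose_two)
    ultimately have ?thesis using k by simp }
  moreover
  { assume k: "k = 4"
    have l: "ln (4::real) > 0" by simp
    have "4 / ln (4::real) > 2" using ln4 l by (simp add: field_simps)
    moreover have "real J \<ge> 4 + 4 / ln 4" using assms(3) k by simp
    ultimately have "real J > 6" by linarith
    hence "J > 6" by simp
    moreover have "(4::nat) choose 2 = 6" by (simp add: choose_two)
    ultimately have ?thesis using k by simp }
  ultimately show ?thesis by blast
qed

lemma telescope: "(\<Sum>k\<in>{5..N+4}. 1 / (real k * (real k - 1))) = 1/4 - 1 / (real N + 4)"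
proof (induction N)
  case 0
  then show ?case by simp
next
  case (Suc N)
  have "{5..Suc N + 4} = insert (Suc N + 4) {5..N+4}" by auto
  hence "(\<Sum>k\<in>{5..Suc N+4}. 1 / (real k * (real k - 1))) =
     1 / (real (Suc N + 4) * (real (Suc N + 4) - 1)) + (\<Sum>k\<in>{5..N+4}. 1 / (real k * (real k - 1)))"
    by simp
  also have "\<dots> = 1/4 - 1 / (real (Suc N) + 4)"
  proof -
    have gen: "1 / ((x + 5) * (x + 5 - 1)) + (1/4 - 1 / (x + 4)) = 1/4 - 1 / (x + 5)" if "x \<ge> 0" for x :: real
    proof -
      have p4: "x + 4 > 0" "x + 5 > 0" using that by auto
      have h: "1/((x+5)*(x+4)) = 1/(x+4) - 1/(x+5)" using p4 by (simp add: field_simps)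
      have e: "x + 5 - 1 = x + 4" by simp
      show ?thesis unfolding e h by linarith
    qed
    show ?thesis unfolding Suc.IH using gen[of "real N"] by (simp add: add.commute add.left_commute)
  qed
  finally show ?case .
qed

lemma sum_tail: "(\<Sum>k\<in>{5..M}. 1 / (real k * (real k - 1))) \<le> 1/4"
proof (cases "M \<ge> 4")
  case True
  then obtain N where "M = N + 4" by (metis le_add_diff_inverse2)
  thus ?thesis using telescope[of N] by simp
next
  case False
  thus ?thesis by simp
qed

lemma gnp_Idx:
  assumes "0 \<le> p" "p \<le> 1" "finite K"
  shows "gnp_prob n p (\<lambda>E. \<exists>k\<in>K. \<exists>i\<in>Idx n k (Jf k). snd i \<subseteq> E)
     \<le> (\<Sum>k\<in>K. real (n choose k) * real ((k choose 2) choose Jf k) * p ^ Jf k)"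
proof -
  have "gnp_prob n p (\<lambda>E. \<exists>k\<in>K. \<exists>i\<in>Idx n k (Jf k). snd i \<subseteq> E)
     \<le> (\<Sum>k\<in>K. gnp_prob n p (\<lambda>E. \<exists>i\<in>Idx n k (Jf k). snd i \<subseteq> E))"
    by (rule gnp_union[OF assms])
  also have "\<dots> \<le> (\<Sum>k\<in>K. \<Sum>i\<in>Idx n k (Jf k). gnp_prob n p (\<lambda>E. snd i \<subseteq> E))"
    by (intro sum_mono gnp_union[OF assms(1,2) finite_Idx])
  also have "\<dots> = (\<Sum>k\<in>K. \<Sum>i\<in>Idx n k (Jf k). p ^ Jf k)"
  proof (intro sum.cong refl)
    fix k i assume "i \<in> Idx n k (Jf k)"
    hence "snd i \<subseteq> all_edges n" "card (snd i) = Jf k" unfolding Idx_def by auto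
    thus "gnp_prob n p (\<lambda>E. snd i \<subseteq> E) = p ^ Jf k" using gnp_superset by simp
  qed
  also have "\<dots> = (\<Sum>k\<in>K. real (n choose k) * real ((k choose 2) choose Jf k) * p ^ Jf k)"
    by (simp add: card_Idx)
  finally show ?thesis .
qed

theorem mainTheorem10:
  fixes d t :: real and n :: nat
  assumes "d \<ge> 0" and "n \<ge> 3" and "t \<ge> 2"
    and "3 * ln ((d + 1) * exp 2) * ln t \<le> ln (real n)"
  shows "gnp_prob n (d / real n)
           (\<lambda>E. \<exists>k j. 2 \<le> k \<and> real k \<le> t \<and> real j \<ge> real k + real k / ln (real k)
                   \<and> has_subgraph n E k j)
         \<le> 15 / real n"
proof -
  define p where "p = d / real n"
  define M where "M = nat \<lfloor>t\<rfloor>"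
  define Jf where "Jf = (\<lambda>k::nat. nat \<lceil>real k + real k / ln (real k)\<rceil>)"
  have npos: "real n > 0" using assms by simp
  have p0: "0 \<le> p" unfolding p_def using assms by simp
  have p1: "p \<le> 1"
  proof (rule ccontr)
    assume "\<not> p \<le> 1"
    hence dn: "d > real n" unfolding p_def using npos by (simp add: field_simps)
    have a_eq: "ln ((d + 1) * exp 2) = ln (d + 1) + 2" using assms by (simp add: ln_mult)
    have "ln (real n) < ln (d + 1)" using dn npos by simp
    hence aL: "ln ((d + 1) * exp 2) > ln (real n) + 2" using a_eq by simp
    have "ln t \<ge> ln 2" using assms by simp
    hence lt: "ln t \<ge> 1/3" using ln2_ge by linarith
    have "0 \<le> ln (real n)" using assms(2) by simp
    hence "0 \<le> 3 * ln ((d + 1) * exp 2)" using aL by linarith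
    hence "3 * ln ((d + 1) * exp 2) * (1/3) \<le> 3 * ln ((d + 1) * exp 2) * ln t"
      using lt by (intro mult_left_mono) auto
    thus False using assms(4) aL by simp
  qed
  have "gnp_prob n p (\<lambda>E. \<exists>k j. 2 \<le> k \<and> real k \<le> t \<and> real j \<ge> real k + real k / ln (real k)
                   \<and> has_subgraph n E k j)
     \<le> gnp_prob n p (\<lambda>E. \<exists>k\<in>{2..M}. \<exists>i\<in>Idx n k (Jf k). snd i \<subseteq> E)"
  proof (rule gnp_mono[OF p0 p1])
    fix E assume E: "E \<subseteq> all_edges n"
      and "\<exists>k j. 2 \<le> k \<and> real k \<le> t \<and> real j \<ge> real k + real k / ln (real k) \<and> has_subgraph n E k j"
    then obtain k j where kj: "2 \<le> k" "real k \<le> t" "real j \<ge> real k + real k / ln (real k)" "has_subgraph n E k j"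
      by blast
    have kM: "k \<le> M" unfolding M_def using kj(2) by (simp add: le_nat_floor)
    have jJ: "Jf k \<le> j" unfolding Jf_def using kj(3) by (simp add: nat_ceiling_le_eq)
    have "k \<in> {2..M}" using kM kj(1) by simp
    thus "\<exists>k\<in>{2..M}. \<exists>i\<in>Idx n k (Jf k). snd i \<subseteq> E"
      using has_subgraph_down[OF kj(4) jJ E] by blast
  qed
  also have "\<dots> \<le> (\<Sum>k\<in>{2..M}. real (n choose k) * real ((k choose 2) choose Jf k) * p ^ Jf k)"
    by (rule gnp_Idx[OF p0 p1]) simp
  also have "\<dots> \<le> (\<Sum>k\<in>{2..M}. if k < 5 then 0 else 60 / (real n * real k * (real k - 1)))"
  proof (rule sum_mono)
    fix k assume k: "k \<in> {2..M}"
    have Jk: "real (Jf k) \<ge> real k + real k / ln (real k)" unfolding Jf_def by linarith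
    have f0: "0 \<le> \<lfloor>t\<rfloor>" using assms(3) by simp
    have "int k \<le> \<lfloor>t\<rfloor>" using k f0 unfolding M_def by (simp add: le_nat_iff)
    hence kt: "real k \<le> t" by (simp add: le_floor_iff)
    show "real (n choose k) * real ((k choose 2) choose Jf k) * p ^ Jf k
          \<le> (if k < 5 then 0 else 60 / (real n * real k * (real k - 1)))"
    proof (cases "k < 5")
      case True
      hence "(k choose 2) < Jf k" using small_k[OF _ _ Jk] k by auto
      thus ?thesis using True by (simp add: binomial_eq_0)
    next
      case False
      have "ln (real k) \<le> ln t" using kt False by simp
      thus ?thesis using term_bound[OF assms(1,2) _ _ assms(4) Jk] False unfolding p_def by simp
    qed
  qed
  also have "\<dots> = (\<Sum>k\<in>{5..M}. 60 / (real n * real k * (real k - 1)))"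
  proof -
    have e: "{2..M} \<inter> - {k. k < 5} = {5..M}" by auto
    show ?thesis by (simp only: sum.If_cases[OF finite_atLeastAtMost] e sum.neutral_const add_0)
  qed
  also have "\<dots> = (60 / real n) * (\<Sum>k\<in>{5..M}. 1 / (real k * (real k - 1)))"
  proof -
    have "\<And>k. 60 / (real n * real k * (real k - 1)) = (60 / real n) * (1 / (real k * (real k - 1)))"
      by (simp add: mult.assoc)
    thus ?thesis by (simp only: sum_distrib_left)
  qed
  also have "\<dots> \<le> (60 / real n) * (1/4)"
    using sum_tail npos by (intro mult_left_mono) auto
  also have "\<dots> = 15 / real n" by simp
  finally show ?thesis unfolding p_def .
qed

end
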